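(* For integers $n\ge1$, $k\ge0$, $\ell\ge0$, let \[E(n,k,\ell)=\sum_{\substack{i_0+i_1+\cdots+i_k=n\\ j_0+j_1+\cdots+j_k=\ell}}\prod_{t=0}^kN(i_t,j_t+1),\] where the sum ranges over all compositions $(i_0,\ldots,i_k)$ of $n$ into $k+1$ positive parts and all weak compositions $(j_0,\ldots,j_k)$ of $\ell$ into $k+1$ nonnegative parts. Then $E(n,k,\ell)=N_k(n,\ell+1)$.
   Context: $N(i,j)=\frac1i\binom ij\binom i{j-1}$ is a Narayana number, and the generalized Narayana numbers are $N_k(n,r)=\frac{k+1}{n}\binom{n}{r+k}\binom{n}{r-1}$ (so $N_0=N$). *)

theory Defs
  imports Complex_Main "HOL-Library.FuncSet"
begin

text \<open>Narayana number N(i,j) = (1/i) binom(i,j) binom(i,j-1), as a rational.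
  Only used with j >= 1, so j - 1 does not truncate.\<close>
definition narayana :: "nat \<Rightarrow> nat \<Rightarrow> rat" where
  "narayana i j = (1 / of_nat i) * of_nat (i choose j) * of_nat (i choose (j - 1))"

definition gen_narayana :: "nat \<Rightarrow> nat \<Rightarrow> nat \<Rightarrow> rat" where
  "gen_narayana k n r = (of_nat (k + 1) / of_nat n) * of_nat (n choose (r + k)) * of_nat (n choose (r - 1))"

definition compositions :: "nat \<Rightarrow> nat \<Rightarrow> (nat \<Rightarrow> nat) set" where
  "compositions n k = {c \<in> {0..k} \<rightarrow>\<^sub>E {1..n}. (\<Sum>t\<le>k. c t) = n}"

definition weak_compositions :: "nat \<Rightarrow> nat \<Rightarrow> (nat \<Rightarrow> nat) set" where
  "weak_compositions l k = {c \<in> {0..k} \<rightarrow>\<^sub>E {0..l}. (\<Sum>t\<le>k. c t) = l}"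

definition E :: "nat \<Rightarrow> nat \<Rightarrow> nat \<Rightarrow> rat" where
  "E n k l = (\<Sum>(i, j) \<in> compositions n k \<times> weak_compositions l k.
               \<Prod>t\<le>k. narayana (i t) (j t + 1))"

end

theory Submission
  imports Defs
begin

lemma absorb: "of_nat (Suc c) * (of_nat (n choose Suc c)::rat) = (of_nat n - of_nat c) * of_nat (n choose c)"
  by (metis binomial_gbinomial gbinomial_absorb_comp gbinomial_absorption of_nat_mult)
lemma core:
  fixes n m l X Y P Q :: rat
  assumes "n > 0" "m > 0" "l > 0"
   "(l+m) * P = (n - (l+m) + 1) * X" "l * Q = (n - l + 1) * Y"
  shows "m/(n+1)*(X+P)*(Y+Q) = ((m-1)*X*Q + m*P*Q + m*X*Y + (m+1)*P*Y)/n"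
proof -
  have "(l+m)*l*(n*(m*(X+P)*(Y+Q)) - (n+1)*((m-1)*X*Q + m*P*Q + m*X*Y + (m+1)*P*Y)) = 0"
    using assms(4,5) by algebra
  then have "n*(m*(X+P)*(Y+Q)) = (n+1)*((m-1)*X*Q + m*P*Q + m*X*Y + (m+1)*P*Y)"
    using assms(1-3) by simp
  then show ?thesis using assms(1) by (simp add: field_simps)
qed

lemma core0:
  fixes n m X P :: rat
  assumes "n > 0" "m > 0" "m * P = (n - m + 1) * X"
  shows "m/(n+1)*(X+P) = ((m-1)*X + m*P)/n"
proof -
  have "n*(m*(X+P)) = (n+1)*((m-1)*X + m*P)"
    using assms(3) by algebra
  then show ?thesis using assms(1) by (simp add: field_simps)
qed

definition A :: "nat \<Rightarrow> nat \<Rightarrow> nat \<Rightarrow> rat" where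
  "A m n l = (if n = 0 then (if m = 0 \<and> l = 0 then 1 else 0)
     else of_nat m / of_nat n * of_nat (n choose (l+m)) * of_nat (n choose l))"

lemma R:
  assumes "m \<ge> 1"
  shows "A m (Suc n) l = A (m-1) n l + A m n l + (if l=0 then 0 else A m n (l-1) + A (Suc m) n (l-1))"
proof -
  obtain m' where m: "m = Suc m'" using assms by (cases m) auto
  show ?thesis
  proof (cases "n = 0")
    case True
    then show ?thesis unfolding A_def m by (cases l; cases m'; simp)
  next
    case n: False
    show ?thesis
    proof (cases l)
      case 0
      define X where "X = (of_nat (n choose m')::rat)"
      define P where "P = (of_nat (n choose m)::rat)"
      have h: "of_nat m * P = (of_nat n - of_nat m + 1) * X"
        using absorb[of m' n] unfolding X_def P_def m by simp
      have "of_nat m/(of_nat n+1)*(X+P) = ((of_nat m-1)*X + of_nat m*P)/of_nat n"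
        by (rule core0) (use n h m in auto)
      moreover have "A m (Suc n) l = of_nat m/(of_nat n+1)*(X+P)"
        unfolding A_def X_def P_def m 0 by (simp add: add.commute)
      moreover have "A (m-1) n l + A m n l = ((of_nat m-1)*X + of_nat m*P)/of_nat n"
        unfolding A_def X_def P_def m 0 using n by (simp add: field_simps)
      ultimately show ?thesis using 0 by simp
    next
      case (Suc l')
      define X where "X = (of_nat (n choose (l+m')) :: rat)"
      define P where "P = (of_nat (n choose (l+m))::rat)"
      define Y where "Y = (of_nat (n choose l') :: rat)"
      define Q where "Q = (of_nat (n choose l)::rat)"
      have h1: "(of_nat l + of_nat m) * P = (of_nat n - (of_nat l + of_nat m) + 1) * X"
        using absorb[of "l+m'" n] unfolding X_def P_def m by (simp add: algebra_simps)
      have h2: "of_nat l * Q = (of_nat n - of_nat l + 1) * Y"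
        using absorb[of l' n] unfolding Y_def Q_def Suc by simp
      have "of_nat m/(of_nat n+1)*(X+P)*(Y+Q) = ((of_nat m-1)*X*Q + of_nat m*P*Q + of_nat m*X*Y + (of_nat m+1)*P*Y)/of_nat n"
        by (rule core[where l="of_nat l"]) (use n h1 h2 m Suc in auto)
      then show ?thesis unfolding A_def X_def P_def Y_def Q_def using n Suc m
        by (simp add: field_simps)
    qed
  qed
qed

lemma A_n0: "A a 0 j = (if a = 0 \<and> j = 0 then 1 else 0)" by (simp add: A_def)
lemma A_m0: "A 0 n l = (if n = 0 \<and> l = 0 then 1 else 0)" by (simp add: A_def)

lemma A0mult: "A 0 i j * x = (if i = 0 then (if j = 0 then x else 0) else 0)" by (simp add: A_def)
lemma An0mult: "A a 0 j * x = (if j = 0 then (if a = 0 then x else 0) else 0)" by (simp add: A_def)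
lemma conv0: "(\<Sum>i\<le>n. \<Sum>j\<le>l. A 0 i j * A b (n-i) (l-j)) = A b n l"
proof -
  have "(\<Sum>i\<le>n. \<Sum>j\<le>l. A 0 i j * A b (n-i) (l-j)) = (\<Sum>i\<le>n. if i = 0 then A b n l else 0)"
    by (rule sum.cong) (auto simp: A0mult sum.delta)
  also have "\<dots> = A b n l" by (simp add: sum.delta)
  finally show ?thesis .
qed

lemma shiftS: "(\<Sum>j\<le>(l::nat). (if j = 0 then 0 else h (j-1)) * (g (l-j)::rat)) =
   (if l = 0 then 0 else \<Sum>j\<le>l-1. h j * g (l-1-j))"
proof (cases l)
  case 0 then show ?thesis by simp
next
  case (Suc l') then show ?thesis by (simp add: sum.atMost_Suc_shift del: sum.atMost_Suc)
qed

lemma conv: "(\<Sum>i\<le>n. \<Sum>j\<le>l. A a i j * A b (n-i) (l-j)) = A (a+b) n l"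
proof (induction n arbitrary: a b l)
  case 0
  have "(\<Sum>i\<le>0. \<Sum>j\<le>l. A a i j * A b (0-i) (l-j)) = (if a = 0 then A b 0 l else 0)"
    by (simp add: An0mult sum.delta)
  then show ?case by (simp add: A_n0)
next
  case (Suc n)
  show ?case
  proof (cases a)
    case 0 then show ?thesis using conv0 by simp
  next
    case aS: (Suc a')
    let ?B = "\<lambda>i j. A b (n-i) (l-j)"
    have "(\<Sum>i\<le>Suc n. \<Sum>j\<le>l. A a i j * A b (Suc n-i) (l-j))
        = (\<Sum>j\<le>l. A a 0 j * A b (Suc n) (l-j)) + (\<Sum>i\<le>n. \<Sum>j\<le>l. A a (Suc i) j * ?B i j)"
      by (simp add: sum.atMost_Suc_shift del: sum.atMost_Suc)
    also have "(\<Sum>j\<le>l. A a 0 j * A b (Suc n) (l-j)) = 0" using aS by (simp add: An0mult)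
    also have "(\<Sum>i\<le>n. \<Sum>j\<le>l. A a (Suc i) j * ?B i j)
       = (\<Sum>i\<le>n. \<Sum>j\<le>l. A a' i j * ?B i j) + (\<Sum>i\<le>n. \<Sum>j\<le>l. A a i j * ?B i j)
         + (\<Sum>i\<le>n. \<Sum>j\<le>l. (if j = 0 then 0 else A a i (j-1) + A (Suc a) i (j-1)) * ?B i j)"
    proof -
      have "\<And>i j. A a (Suc i) j = A a' i j + A a i j + (if j=0 then 0 else A a i (j-1) + A (Suc a) i (j-1))"
        using R[of a] aS by simp
      then show ?thesis by (simp add: sum.distrib distrib_right)
    qed
    also have "(\<Sum>i\<le>n. \<Sum>j\<le>l. (if j = 0 then 0 else A a i (j-1) + A (Suc a) i (j-1)) * ?B i j)
       = (\<Sum>i\<le>n. if l = 0 then 0 else \<Sum>j\<le>l-1. (A a i j + A (Suc a) i j) * A b (n-i) (l-1-j))"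
      by (rule sum.cong[OF refl], rule shiftS[where h="\<lambda>j. A a _ j + A (Suc a) _ j" and g="\<lambda>j. A b (n-_) j"])
    also have "\<dots> = (if l = 0 then 0 else A (a+b) n (l-1) + A (Suc a + b) n (l-1))"
    proof (cases l)
      case 0 then show ?thesis by simp
    next
      case (Suc l')
      have "(\<Sum>i\<le>n. \<Sum>j\<le>l'. (A a i j + A (Suc a) i j) * A b (n - i) (l' - j))
         = (\<Sum>i\<le>n. \<Sum>j\<le>l'. A a i j * A b (n - i) (l' - j)) + (\<Sum>i\<le>n. \<Sum>j\<le>l'. A (Suc a) i j * A b (n - i) (l' - j))"
        by (simp add: distrib_right sum.distrib)
      then show ?thesis using Suc Suc.IH[of a b l'] Suc.IH[of "Suc a" b l'] by simp
    qed
    finally show ?thesis using Suc.IH R[of "a+b" n l] aS by simp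
  qed
qed

definition gc :: "nat \<Rightarrow> nat \<Rightarrow> nat \<Rightarrow> (nat \<Rightarrow> nat) set" where
  "gc lo n k = {c \<in> {0..k} \<rightarrow>\<^sub>E {lo..n}. (\<Sum>t\<le>k. c t) = n}"

lemma gc_finite: "finite (gc lo n k)"
  unfolding gc_def by (rule finite_subset[of _ "{0..k} \<rightarrow>\<^sub>E {lo..n}"]) (auto intro: finite_PiE)

lemma gc_split: "gc lo n (Suc k) = (\<lambda>(i,c). c(Suc k := i)) ` (SIGMA i:{lo..n}. gc lo (n-i) k)"
proof (intro equalityI subsetI)
  fix c assume c: "c \<in> gc lo n (Suc k)"
  define i where "i = c (Suc k)"
  define c' where "c' = c(Suc k := undefined)"
  have cP: "c \<in> {0..Suc k} \<rightarrow>\<^sub>E {lo..n}" and cs: "(\<Sum>t\<le>Suc k. c t) = n" using c by (auto simp: gc_def)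
  have s: "(\<Sum>t\<le>k. c t) + i = n" using cs by (simp add: i_def)
  have le: "c t \<le> (\<Sum>t\<le>k. c t)" if "t \<le> k" for t
    using that by (intro member_le_sum) auto
  have "c' \<in> gc lo (n-i) k"
    unfolding gc_def c'_def
  proof (intro CollectI conjI)
    show "c(Suc k := undefined) \<in> {0..k} \<rightarrow>\<^sub>E {lo..n - i}"
      using cP le s by (auto simp: PiE_def Pi_def extensional_def)
    show "(\<Sum>t\<le>k. (c(Suc k := undefined)) t) = n - i" using s by simp
  qed
  moreover have "i \<in> {lo..n}" using cP by (auto simp: i_def PiE_def Pi_def)
  moreover have "c = c'(Suc k := i)" by (simp add: c'_def i_def)
  ultimately show "c \<in> (\<lambda>(i,c). c(Suc k := i)) ` (SIGMA i:{lo..n}. gc lo (n-i) k)" by force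
next
  fix x assume "x \<in> (\<lambda>(i,c). c(Suc k := i)) ` (SIGMA i:{lo..n}. gc lo (n-i) k)"
  then obtain i c' where i: "i \<in> {lo..n}" and c': "c' \<in> gc lo (n-i) k" and x: "x = c'(Suc k := i)" by auto
  have cP: "c' \<in> {0..k} \<rightarrow>\<^sub>E {lo..n-i}" and cs: "(\<Sum>t\<le>k. c' t) = n - i" using c' by (auto simp: gc_def)
  have "x \<in> {0..Suc k} \<rightarrow>\<^sub>E {lo..n}"
    using cP i unfolding x by (auto simp: PiE_def Pi_def extensional_def le_Suc_eq)
  moreover have "(\<Sum>t\<le>Suc k. x t) = n"
  proof -
    have "(\<Sum>t\<le>k. x t) = (\<Sum>t\<le>k. c' t)" unfolding x by (intro sum.cong) auto
    then show ?thesis using cs i by (simp add: x)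
  qed
  ultimately show "x \<in> gc lo n (Suc k)" by (simp add: gc_def)
qed

lemma gc_inj: "inj_on (\<lambda>(i,c). c(Suc k := i)) (SIGMA i:{lo..n}. gc lo (n-i) k)"
proof (rule inj_onI, clarify)
  fix i c j d assume c: "c \<in> gc lo (n-i) k" and d: "d \<in> gc lo (n-j) k" and e: "c(Suc k := i) = d(Suc k := j)"
  have "i = j" using fun_cong[OF e, of "Suc k"] by simp
  moreover have "c = d"
  proof
    fix t show "c t = d t"
    proof (cases "t = Suc k")
      case True
      then have "c t = undefined" "d t = undefined" using c d by (auto simp: gc_def PiE_def extensional_def)
      then show ?thesis by simp
    next
      case False then show ?thesis using fun_cong[OF e, of t] by simp
    qed
  qed
  ultimately show "i = j \<and> c = d" by simp
qed

lemma comp_gc: "compositions n k = gc 1 n k" by (simp add: compositions_def gc_def)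
lemma weak_gc: "weak_compositions n k = gc 0 n k" by (simp add: weak_compositions_def gc_def)

lemma E_alt: "E n k l = (\<Sum>c\<in>gc 1 n k. \<Sum>d\<in>gc 0 l k. \<Prod>t\<le>k. narayana (c t) (d t + 1))"
  unfolding E_def comp_gc weak_gc by (simp add: sum.cartesian_product)

lemma sumSig: "finite I \<Longrightarrow> (\<forall>i\<in>I. finite (C i)) \<Longrightarrow> (\<Sum>p\<in>Sigma I C. h p) = (\<Sum>i\<in>I. \<Sum>c\<in>C i. h (i,c))"
  by (subst sum.Sigma) auto

lemma E_Suc: "E n (Suc k) l = (\<Sum>i\<in>{1..n}. \<Sum>j\<in>{0..l}. E (n-i) k (l-j) * narayana i (j+1))"
proof -
  let ?g = "\<lambda>c d. \<Prod>t\<le>k. narayana (c t) (d t + 1)"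
  let ?u = "\<lambda>(i::nat,c::nat\<Rightarrow>nat). c(Suc k := i)"
  have pr: "(\<Prod>t\<le>Suc k. narayana ((c(Suc k := i)) t) ((d(Suc k := j)) t + 1)) = ?g c d * narayana i (j+1)"
    for c d i j
  proof -
    have "(\<Prod>t\<le>k. narayana ((c(Suc k := i)) t) ((d(Suc k := j)) t + 1)) = ?g c d"
      by (intro prod.cong) auto
    then show ?thesis by simp
  qed
  have "E n (Suc k) l = (\<Sum>c\<in>gc 1 n (Suc k). \<Sum>d\<in>gc 0 l (Suc k). \<Prod>t\<le>Suc k. narayana (c t) (d t + 1))"
    by (rule E_alt)
  also have "\<dots> = (\<Sum>p\<in>(SIGMA i:{1..n}. gc 1 (n-i) k). \<Sum>q\<in>(SIGMA j:{0..l}. gc 0 (l-j) k).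
       \<Prod>t\<le>Suc k. narayana (?u p t) (?u q t + 1))"
    unfolding gc_split by (simp add: sum.reindex[OF gc_inj])
  also have "\<dots> = (\<Sum>p\<in>(SIGMA i:{1..n}. gc 1 (n-i) k). \<Sum>q\<in>(SIGMA j:{0..l}. gc 0 (l-j) k).
       ?g (snd p) (snd q) * narayana (fst p) (fst q + 1))"
    by (intro sum.cong refl) (auto simp: pr)
  also have "\<dots> = (\<Sum>i\<in>{1..n}. \<Sum>c\<in>gc 1 (n-i) k. \<Sum>j\<in>{0..l}. \<Sum>d\<in>gc 0 (l-j) k.
       ?g c d * narayana i (j + 1))"
    by (simp add: sumSig gc_finite)
  also have "\<dots> = (\<Sum>i\<in>{1..n}. \<Sum>j\<in>{0..l}. \<Sum>c\<in>gc 1 (n-i) k. \<Sum>d\<in>gc 0 (l-j) k.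
       ?g c d * narayana i (j + 1))"
    by (intro sum.cong refl) (rule sum.swap)
  also have "\<dots> = (\<Sum>i\<in>{1..n}. \<Sum>j\<in>{0..l}. E (n-i) k (l-j) * narayana i (j+1))"
    by (simp add: E_alt sum_distrib_right)
  finally show ?thesis .
qed

lemma nar_A: "narayana i (Suc j) = A (Suc 0) i j" by (simp add: narayana_def A_def)

lemma gc0: "gc lo n 0 = (if lo \<le> n then {(\<lambda>t. undefined)(0 := n)} else {})"
proof (intro equalityI subsetI)
  fix c assume c: "c \<in> gc lo n 0"
  then have "c \<in> {0..0} \<rightarrow>\<^sub>E {lo..n}" "c 0 = n" by (auto simp: gc_def)
  then show "c \<in> (if lo \<le> n then {(\<lambda>t. undefined)(0 := n)} else {})"
    by (auto simp: PiE_def extensional_def fun_eq_iff)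
next
  fix c :: "nat \<Rightarrow> nat" assume "c \<in> (if lo \<le> n then {(\<lambda>t. undefined)(0 := n)} else {})"
  then show "c \<in> gc lo n 0" by (auto simp: gc_def PiE_def extensional_def split: if_splits)
qed

lemma E0: "E n 0 l = A 1 n l"
  by (simp add: E_alt gc0 narayana_def A_def)

lemma E_A: "E n k l = A (Suc k) n l"
proof (induction k arbitrary: n l)
  case 0 then show ?case using E0 by simp
next
  case (Suc k)
  have "E n (Suc k) l = (\<Sum>i\<in>{1..n}. \<Sum>j\<in>{0..l}. A 1 i j * A (Suc k) (n-i) (l-j))"
    by (simp add: E_Suc Suc.IH nar_A mult.commute)
  also have "\<dots> = (\<Sum>i\<in>{1..n}. \<Sum>j\<le>l. A 1 i j * A (Suc k) (n-i) (l-j))"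
    by (simp add: atLeast0AtMost)
  also have "\<dots> = (\<Sum>i\<le>n. \<Sum>j\<le>l. A 1 i j * A (Suc k) (n-i) (l-j))"
    by (rule sum.mono_neutral_left) (auto simp: A_def)
  also have "\<dots> = A (Suc (Suc k)) n l" by (simp add: conv)
  finally show ?case .
qed

theorem lemma4p1:
  fixes n k l :: nat
  assumes "n \<ge> 1"
  shows "E n k l = gen_narayana k n (l + 1)"
  using assms by (simp add: E_A A_def gen_narayana_def)
end
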